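(* For every $k\ge1$ there is $c>0$ such that the following holds. For every $n\ge k$ and every pair $w,u$ of functions from $[n]^{(k)}$ to $\mathbb{R}$, $$\operatorname{disc}^+(w,u)\operatorname{disc}^-(w,u)\ge c^2 \gamma(w,u)^2 n^2.$$
   Context: $[n]=\{1,\dots,n\}$; $V^{(k)}$ is the family of $k$-subsets of $V$; $\langle w,u\rangle=\sum_{e\in V^{(k)}}w(e)u(e)$; $d(w)=w(V)/\binom{|V|}k$ where $w(V)=\sum_e w(e)$; for a permutation $\pi$ of $V$, $w_\pi(e)=w(\pi^{-1}(e))$. With $n=|V|$: $\operatorname{disc}^+(w,u)=\max_\pi\langle w_\pi,u\rangle-d(w)d(u)\binom nk$ and $\operatorname{disc}^-(w,u)=d(w)d(u)\binom nk-\min_\pi\langle w_\pi,u\rangle$. Fix distinct $x,y\in V$ and let $\tau=(xy)$ be the transposition; then $\gamma(w,u)=\mathbb{E}_{\pi,\sigma}|\langle w_\pi,u_\sigma\rangle-\langle w_{\tau\pi},u_\sigma\rangle|$ where $\pi,\sigma$ are independent uniformly random permutations of $V$ (this does not depend on the choice of $x,y$). *)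

theory Defs
  imports "HOL-Analysis.Analysis" "HOL-Combinatorics.Transposition"
begin

definition ksubsets :: "'a set \<Rightarrow> nat \<Rightarrow> 'a set set" where
  "ksubsets V k = {e. e \<subseteq> V \<and> card e = k}"

definition ip :: "'a set \<Rightarrow> nat \<Rightarrow> ('a set \<Rightarrow> real) \<Rightarrow> ('a set \<Rightarrow> real) \<Rightarrow> real" where
  "ip V k w u = (\<Sum>e\<in>ksubsets V k. w e * u e)"

definition dens :: "'a set \<Rightarrow> nat \<Rightarrow> ('a set \<Rightarrow> real) \<Rightarrow> real" where
  "dens V k w = (\<Sum>e\<in>ksubsets V k. w e) / real (card V choose k)"

definition permw :: "('a \<Rightarrow> 'a) \<Rightarrow> ('a set \<Rightarrow> real) \<Rightarrow> 'a set \<Rightarrow> real" where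
  "permw \<pi> w e = w (inv \<pi> ` e)"

definition perms :: "'a set \<Rightarrow> ('a \<Rightarrow> 'a) set" where
  "perms V = {\<pi>. \<pi> permutes V}"

definition disc_plus :: "'a set \<Rightarrow> nat \<Rightarrow> ('a set \<Rightarrow> real) \<Rightarrow> ('a set \<Rightarrow> real) \<Rightarrow> real" where
  "disc_plus V k w u =
     Max ((\<lambda>\<pi>. ip V k (permw \<pi> w) u) ` perms V)
     - dens V k w * dens V k u * real (card V choose k)"

definition disc_minus :: "'a set \<Rightarrow> nat \<Rightarrow> ('a set \<Rightarrow> real) \<Rightarrow> ('a set \<Rightarrow> real) \<Rightarrow> real" where
  "disc_minus V k w u =
     dens V k w * dens V k u * real (card V choose k)
     - Min ((\<lambda>\<pi>. ip V k (permw \<pi> w) u) ` perms V)"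

definition gamma_xy :: "'a set \<Rightarrow> nat \<Rightarrow> 'a \<Rightarrow> 'a \<Rightarrow> ('a set \<Rightarrow> real) \<Rightarrow> ('a set \<Rightarrow> real) \<Rightarrow> real" where
  "gamma_xy V k x y w u =
     (\<Sum>\<pi>\<in>perms V. \<Sum>\<sigma>\<in>perms V.
        \<bar>ip V k (permw \<pi> w) (permw \<sigma> u)
         - ip V k (permw (Transposition.transpose x y \<circ> \<pi>) w) (permw \<sigma> u)\<bar>)
     / (real (card (perms V)))^2"

text \<open>For V = [n] we fix x = 1, y = 2 (gamma does not depend on the choice).
  If n < 2 there is no transposition; we then set gamma = 0.\<close>
definition gamma_n :: "nat \<Rightarrow> nat \<Rightarrow> (nat set \<Rightarrow> real) \<Rightarrow> (nat set \<Rightarrow> real) \<Rightarrow> real" where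
  "gamma_n n k w u = (if n \<ge> 2 then gamma_xy {1..n} k 1 2 w u else 0)"

end

theory Submission
  imports Defs "HOL-Combinatorics.Permutations" "HOL-Computational_Algebra.Polynomial"
begin

definition xn :: "nat \<Rightarrow> nat \<Rightarrow> real" where "xn k i = real i / real k"

definition Lg :: "nat \<Rightarrow> nat \<Rightarrow> real poly" where
  "Lg k i = (\<Prod>j\<in>{0..k}-{i}. smult (1/(xn k i - xn k j)) [:- xn k j, 1:])"

lemma xn_inj: "k \<ge> 1 \<Longrightarrow> xn k i = xn k j \<longleftrightarrow> i = j"
  by (auto simp: xn_def divide_simps)

lemma poly_Lg: assumes "k \<ge> 1" "i \<le> k" "j \<le> k"
  shows "poly (Lg k i) (xn k j) = (if i = j then 1 else 0)"
proof (cases "i = j")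
  case True
  have "poly (Lg k i) (xn k j) = (\<Prod>l\<in>{0..k}-{i}. 1)"
    unfolding Lg_def poly_prod
    using assms True
  proof (intro prod.cong refl)
    fix l assume "l \<in> {0..k}-{i}"
    then have "xn k i - xn k l \<noteq> 0" using assms True by (auto simp: xn_inj)
    then show "poly (smult (1/(xn k i - xn k l)) [:- xn k l, 1:]) (xn k j) = 1"
    proof -
      have h: "poly [:- xn k l, 1:] (xn k j) = xn k i - xn k l" using True by simp
      show ?thesis unfolding poly_smult h using \<open>xn k i - xn k l \<noteq> 0\<close> by simp
    qed
  qed
  then show ?thesis using True by simp
next
  case False
  have "poly (Lg k i) (xn k j) = (\<Prod>l\<in>{0..k}-{i}. (1/(xn k i - xn k l)) * (xn k j - xn k l))"
    unfolding Lg_def poly_prod by (intro prod.cong) (auto simp: diff_divide_distrib)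
  also have "\<dots> = 0" using False assms by (intro prod_zero) auto
  finally show ?thesis using False by simp
qed

lemma degree_Lg: "degree (Lg k i) \<le> k" if "i \<le> k"
proof -
  have "degree (Lg k i) \<le> sum (degree \<circ> (\<lambda>j. smult (1/(xn k i - xn k j)) [:- xn k j, 1:])) ({0..k}-{i})"
    unfolding Lg_def by (rule degree_prod_sum_le) auto
  also have "\<dots> \<le> sum (\<lambda>j. 1) ({0..k}-{i})"
    by (intro sum_mono) (auto simp: degree_smult_le)
  also have "\<dots> \<le> k" using that by simp
  finally show ?thesis .
qed

lemma interp: assumes "k \<ge> 1" "degree P \<le> k"
  shows "P = (\<Sum>i\<le>k. smult (poly P (xn k i)) (Lg k i))"
proof (rule poly_eqI_degree[of "xn k ` {..k}"])
  fix x assume "x \<in> xn k ` {..k}"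
  then obtain j where j: "j \<le> k" "x = xn k j" by auto
  have "poly (\<Sum>i\<le>k. smult (poly P (xn k i)) (Lg k i)) x
      = (\<Sum>i\<le>k. poly P (xn k i) * (if i = j then 1 else 0))"
    unfolding poly_sum using j assms by (intro sum.cong) (auto simp: poly_Lg)
  also have "\<dots> = poly P x" using j by (simp add: sum.delta if_distrib cong: if_cong)
  finally show "poly P x = poly (\<Sum>i\<le>k. smult (poly P (xn k i)) (Lg k i)) x" by simp
next
  have "card (xn k ` {..k}) = k + 1"
    using assms by (subst card_image) (auto intro: inj_onI simp: xn_inj)
  then show "degree P < card (xn k ` {..k})" using assms by simp
  have "degree (\<Sum>i\<le>k. smult (poly P (xn k i)) (Lg k i)) \<le> k"
    by (intro degree_sum_le) (auto intro!: order.trans[OF degree_smult_le] degree_Lg)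
  then show "degree (\<Sum>i\<le>k. smult (poly P (xn k i)) (Lg k i)) < card (xn k ` {..k})"
    using \<open>card _ = _\<close> by simp
qed

definition KL :: "nat \<Rightarrow> real" where
  "KL k = 1 + (\<Sum>i\<le>k. \<Sum>l\<le>k. \<bar>coeff (Lg k i) l\<bar>)"

lemma KL_pos: "KL k > 0"
  unfolding KL_def by (smt (verit) sum_nonneg abs_ge_zero)

lemma coeff_bound:
  assumes "k \<ge> 1" "degree P \<le> k" "\<And>x. x \<in> {0..1} \<Longrightarrow> \<bar>poly P x\<bar> \<le> R"
  shows "\<bar>coeff P l\<bar> \<le> KL k * R"
proof (cases "l \<le> k")
  case False
  then have "coeff P l = 0" using assms by (intro coeff_eq_0) auto
  moreover have "R \<ge> 0" using assms(3)[of 0] by auto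
  ultimately show ?thesis using KL_pos[of k] by simp
next
  case True
  have R0: "R \<ge> 0" using assms(3)[of 0] by auto
  have xin: "xn k i \<in> {0..1}" if "i \<le> k" for i using that assms by (auto simp: xn_def)
  have "coeff P l = (\<Sum>i\<le>k. poly P (xn k i) * coeff (Lg k i) l)"
    by (subst interp[OF assms(1,2)]) (simp add: coeff_sum)
  also have "\<bar>\<dots>\<bar> \<le> (\<Sum>i\<le>k. \<bar>poly P (xn k i) * coeff (Lg k i) l\<bar>)" by (rule sum_abs)
  also have "\<dots> \<le> (\<Sum>i\<le>k. R * \<bar>coeff (Lg k i) l\<bar>)"
    using xin assms(3) by (intro sum_mono) (auto simp: abs_mult intro!: mult_right_mono)
  also have "\<dots> = R * (\<Sum>i\<le>k. \<bar>coeff (Lg k i) l\<bar>)" by (simp add: sum_distrib_left)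
  also have "\<dots> \<le> R * (\<Sum>i\<le>k. \<Sum>l\<le>k. \<bar>coeff (Lg k i) l\<bar>)"
    using True R0 by (intro mult_left_mono sum_mono) (auto intro: member_le_sum)
  also have "\<dots> \<le> KL k * R" unfolding KL_def using R0 by (simp add: algebra_simps)
  finally show ?thesis .
qed

lemma poly_upto: fixes P :: "real poly" assumes "degree P \<le> k" shows "poly P x = (\<Sum>i\<le>k. coeff P i * x ^ i)"
proof -
  have "(\<Sum>i\<le>degree P. coeff P i * x ^ i) = (\<Sum>i\<le>k. coeff P i * x ^ i)"
    using assms by (intro sum.mono_neutral_left) (auto simp: coeff_eq_0)
  then show ?thesis by (simp only: poly_altdef)
qed

lemma poly_key:
  fixes P :: "real poly"
  assumes k: "k \<ge> 1" and deg: "degree P \<le> k" and P0: "poly P 0 = 0"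
    and bnd: "\<And>x. x \<in> {0..1} \<Longrightarrow> - B \<le> poly P x \<and> poly P x \<le> A"
    and b1: "coeff P 1 \<ge> 0"
  shows "(coeff P 1)^2 \<le> 4 * real k * KL k * A * (A + B)"
proof -
  define R where "R = A + B"
  define K where "K = KL k"
  have A0: "A \<ge> 0" and B0: "B \<ge> 0" using bnd[of 0] P0 by auto
  have R0': "R \<ge> 0" unfolding R_def using A0 B0 by simp
  have absb: "\<bar>poly P x\<bar> \<le> R" if "x \<in> {0..1}" for x
    using bnd[OF that] A0 B0 unfolding R_def by auto
  have cb: "\<bar>coeff P l\<bar> \<le> K * R" for l
    unfolding K_def by (rule coeff_bound[OF k deg absb])
  have K0: "K > 0" unfolding K_def by (rule KL_pos)
  have KR0: "K * R \<ge> 0" using K0 R0' by simp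
  have c0: "coeff P 0 = 0" using P0 by (simp add: poly_0_coeff_0)
  have low: "poly P p \<ge> coeff P 1 * p - real k * K * R * p^2" if p: "p \<in> {0..1}" for p
  proof -
    have split: "{..k} = {0,1} \<union> {2..k}" using k by auto
    have "poly P p = (\<Sum>i\<in>{0,1} \<union> {2..k}. coeff P i * p ^ i)"
      using poly_upto[OF deg, of p] by (simp only: split)
    also have "\<dots> = (\<Sum>i\<in>{0,1}. coeff P i * p ^ i) + (\<Sum>i\<in>{2..k}. coeff P i * p ^ i)"
      by (rule sum.union_disjoint) auto
    also have "(\<Sum>i\<in>{0,1}. coeff P i * p ^ i) = coeff P 1 * p" using c0 by simp
    finally have eq: "poly P p = coeff P 1 * p + (\<Sum>i\<in>{2..k}. coeff P i * p ^ i)" .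
    have s1: "(\<Sum>i\<in>{2..k}. - (K * R * p^2)) \<le> (\<Sum>i\<in>{2..k}. coeff P i * p ^ i)"
    proof (rule sum_mono)
      fix i assume i: "i \<in> {2..k}"
      have pp: "p ^ i \<le> p ^ 2" using p i by (intro power_decreasing) auto
      have "\<bar>coeff P i\<bar> * p ^ i \<le> (K * R) * p^2"
        by (rule mult_mono[OF cb pp KR0]) (use p in simp)
      then have "\<bar>coeff P i * p ^ i\<bar> \<le> K * R * p^2"
        using p by (simp add: abs_mult)
      then show "- (K * R * p^2) \<le> coeff P i * p ^ i" by linarith
    qed
    have c2: "K * R * p^2 \<ge> 0" using KR0 by simp
    have s2: "(\<Sum>i\<in>{2..k}. - (K * R * p^2)) = - (real (k - 1) * (K * R * p^2))"
      by (simp add: sum_constant)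
    have s3: "real (k - 1) * (K * R * p^2) \<le> real k * (K * R * p^2)"
      by (rule mult_right_mono[OF _ c2]) simp
    have s4: "real k * (K * R * p^2) = real k * K * R * p^2" by (simp only: mult.assoc)
    show ?thesis using eq s1 s2 s3 s4 by linarith
  qed
  show ?thesis
  proof (cases "coeff P 1 = 0")
    case True
    have "0 \<le> 4 * real k * KL k * A * (A + B)"
      using A0 B0 KL_pos[of k] by (intro mult_nonneg_nonneg) auto
    then show ?thesis by (simp only: True power2_eq_square mult_zero_left)
  next
    case False
    define b where "b = coeff P 1"
    have bpos: "b > 0" using b1 False unfolding b_def by simp
    have bKR: "b \<le> K * R" using cb[of 1] unfolding b_def by simp
    have R0: "R > 0"
    proof (rule ccontr)
      assume "\<not> R > 0"
      then have "K * R \<le> 0" using K0 by (simp add: mult_nonneg_nonpos)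
      then show False using bKR bpos by simp
    qed
    define Q where "Q = real k * K * R"
    have Q0: "Q > 0" unfolding Q_def using k K0 R0 by simp
    define p where "p = b / (2 * Q)"
    have "p \<le> 1"
    proof -
      have "1 * (K * R) \<le> real k * (K * R)"
        using k K0 R0 by (intro mult_right_mono) auto
      moreover have "Q = real k * (K * R)" unfolding Q_def by (simp add: mult.assoc)
      ultimately have "b \<le> 2 * Q" using bKR Q0 by linarith
      then show ?thesis unfolding p_def using Q0 by simp
    qed
    moreover have "p \<ge> 0" unfolding p_def using bpos Q0 by simp
    ultimately have pin: "p \<in> {0..1}" by simp
    have e1: "A \<ge> poly P p" using bnd[OF pin] by simp
    have e2: "poly P p \<ge> b * p - Q * p^2" using low[OF pin] unfolding Q_def b_def .
    have e3: "b * p - Q * p^2 = b^2 / (4 * Q)" unfolding p_def using Q0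
      by (simp add: field_simps power2_eq_square)
    have "b^2 / (4 * Q) \<le> A" using e1 e2 e3 by linarith
    then have "b^2 \<le> 4 * Q * A" using Q0 by (simp add: field_simps)
    moreover have "4 * Q * A = 4 * real k * KL k * A * (A + B)"
      unfolding Q_def R_def K_def by (simp only: mult_ac)
    ultimately show ?thesis unfolding b_def by simp
  qed
qed


lemma inv_image_image: "p permutes V \<Longrightarrow> inv p ` (p ` e) = e"
  by (simp add: image_inv_f_f permutes_inj)

lemma image_inv_image: "p permutes V \<Longrightarrow> p ` (inv p ` e) = e"
  by (metis image_inv_f_f inv_image_image permutes_inv permutes_inv_inv)

lemma ks_image:
  assumes "p permutes V" "e \<in> ksubsets V k" shows "p ` e \<in> ksubsets V k"
proof -
  have "p ` e \<subseteq> V" using assms permutes_image[OF assms(1)] unfolding ksubsets_def by auto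
  moreover have "card (p ` e) = card e"
    by (rule card_image) (use permutes_inj[OF assms(1)] in \<open>auto intro: inj_on_subset\<close>)
  ultimately show ?thesis using assms unfolding ksubsets_def by auto
qed

lemma ks_bij:
  assumes "p permutes V" shows "bij_betw ((`) p) (ksubsets V k) (ksubsets V k)"
proof (rule bij_betw_byWitness[where f' = "(`) (inv p)"])
  show "\<forall>a\<in>ksubsets V k. inv p ` p ` a = a" using inv_image_image[OF assms] by blast
  show "\<forall>a\<in>ksubsets V k. p ` inv p ` a = a" using image_inv_image[OF assms] by blast
  show "(`) p ` ksubsets V k \<subseteq> ksubsets V k" using ks_image[OF assms] by blast
  show "(`) (inv p) ` ksubsets V k \<subseteq> ksubsets V k" using ks_image[OF permutes_inv[OF assms]] by blast
qed

lemma permw_comp: "bij t \<Longrightarrow> bij a \<Longrightarrow> permw (t \<circ> a) w e = permw a w (inv t ` e)"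
  unfolding permw_def by (simp add: o_inv_distrib image_comp)

lemma permw_id: "permw id w = w"
  unfolding permw_def by (simp add: fun_eq_iff)

lemma ip_inv:
  assumes t: "t permutes V" and a: "bij a" and b: "bij b"
  shows "ip V k (permw (t \<circ> a) w) (permw (t \<circ> b) u) = ip V k (permw a w) (permw b u)"
proof -
  have "ip V k (permw (t \<circ> a) w) (permw (t \<circ> b) u)
      = (\<Sum>e\<in>ksubsets V k. (\<lambda>e'. permw a w e' * permw b u e') (inv t ` e))"
    unfolding ip_def using permutes_bij[OF t] a b by (simp add: permw_comp)
  also have "\<dots> = (\<Sum>e'\<in>ksubsets V k. permw a w e' * permw b u e')"
    by (rule sum.reindex_bij_betw[OF ks_bij[OF permutes_inv[OF t]]])
  finally show ?thesis unfolding ip_def .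
qed

lemma Phi_red:
  assumes p: "p permutes V" and s: "s permutes V"
  shows "ip V k (permw p w) (permw s u) = ip V k (permw (inv s \<circ> p) w) u"
proof -
  have b1: "bij (inv s \<circ> p)" using permutes_bij[OF permutes_inv[OF s]] permutes_bij[OF p]
    by (rule bij_comp[rotated])
  have "ip V k (permw (s \<circ> (inv s \<circ> p)) w) (permw (s \<circ> id) u) = ip V k (permw (inv s \<circ> p) w) (permw id u)"
    by (rule ip_inv[OF s b1]) simp
  moreover have "s \<circ> (inv s \<circ> p) = p" by (simp add: o_assoc permutes_inv_o[OF s])
  ultimately show ?thesis by (simp add: permw_id)
qed

lemma trans_ks:
  assumes fin: "finite V" and e: "e \<in> ksubsets V k" and e': "e' \<in> ksubsets V k"
  shows "\<exists>t. t permutes V \<and> t ` e' = e"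
proof -
  have es: "e \<subseteq> V" "e' \<subseteq> V" "card e = k" "card e' = k" using e e' unfolding ksubsets_def by auto
  have fe: "finite e" "finite e'" using es fin finite_subset by auto
  obtain g where g: "bij_betw g e' e" using finite_same_card_bij[OF fe(2) fe(1)] es by auto
  have "card (V - e') = card (V - e)" using es fe by (simp add: card_Diff_subset)
  then obtain h where h: "bij_betw h (V - e') (V - e)"
    using finite_same_card_bij[of "V - e'" "V - e"] fin by auto
  have "bij_betw (\<lambda>x. if x \<in> e' then g x else h x) (e' \<union> (V - e')) (e \<union> (V - e))"
    by (rule bij_betw_disjoint_Un[OF g h]) auto
  moreover have "e' \<union> (V - e') = V" "e \<union> (V - e) = V" using es by auto
  ultimately have bb: "bij_betw (\<lambda>x. if x \<in> e' then g x else h x) V V" by simp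
  define t where "t = (\<lambda>x. if x \<in> V then (if x \<in> e' then g x else h x) else x)"
  have "bij_betw t V V" using bb unfolding t_def by (rule bij_betw_cong[THEN iffD1, rotated]) auto
  then have "t permutes V" by (rule bij_imp_permutes) (auto simp: t_def)
  moreover have "t ` e' = e"
  proof -
    have "t ` e' = g ` e'" unfolding t_def using es by (intro image_cong) auto
    then show ?thesis using g by (simp add: bij_betw_def)
  qed
  ultimately show ?thesis by blast
qed

lemma mean_ip:
  assumes fin: "finite V" and kV: "k \<le> card V"
  shows "(\<Sum>p\<in>perms V. ip V k (permw p w) u)
       = real (card (perms V)) * (dens V k w * dens V k u * real (card V choose k))"
proof -
  define KS where "KS = ksubsets V k"
  define c where "c e = (\<Sum>p\<in>perms V. w (inv p ` e))" for e
  define N where "N = real (card (perms V))"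
  define C where "C = real (card V choose k)"
  have cardKS: "card KS = card V choose k" unfolding KS_def ksubsets_def using n_subsets[OF fin] by simp
  have C0: "C > 0" unfolding C_def using kV by simp
  have "KS \<subseteq> Pow V" unfolding KS_def ksubsets_def by auto
  then have finKS: "finite KS" using fin by (rule finite_subset[OF _ finite_Pow_iff[THEN iffD2]])
  have const: "c e = c e'" if ee: "e \<in> KS" "e' \<in> KS" for e e'
  proof -
    obtain t where t: "t permutes V" "t ` e' = e" using trans_ks[OF fin] ee unfolding KS_def by blast
    have "c e = (\<Sum>p\<in>perms V. w (inv (t \<circ> p) ` e))"
      unfolding c_def perms_def by (rule setum_permutations_compose_left[OF t(1)])
    also have "\<dots> = c e'" unfolding c_def perms_def
    proof (intro sum.cong refl)
      fix p assume "p \<in> {p. p permutes V}"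
      then have "inv (t \<circ> p) ` e = inv p ` (inv t ` e)"
        using permutes_bij[OF t(1)] permutes_bij[of p V] by (simp add: o_inv_distrib image_comp)
      also have "inv t ` e = e'" using t inv_image_image by metis
      finally show "w (inv (t \<circ> p) ` e) = w (inv p ` e')" by (simp only:)
    qed
    finally show ?thesis .
  qed
  have tot: "(\<Sum>e\<in>KS. c e) = N * (\<Sum>e\<in>KS. w e)"
  proof -
    have "(\<Sum>e\<in>KS. c e) = (\<Sum>p\<in>perms V. \<Sum>e\<in>KS. w (inv p ` e))"
      unfolding c_def by (rule sum.swap)
    also have "\<dots> = (\<Sum>p\<in>perms V. \<Sum>e\<in>KS. w e)"
    proof (rule sum.cong[OF refl])
      fix p assume "p \<in> perms V"
      then have "p permutes V" unfolding perms_def by simp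
      have "bij_betw ((`) (inv p)) KS KS"
        unfolding KS_def by (rule ks_bij[OF permutes_inv[OF \<open>p permutes V\<close>]])
      then show "(\<Sum>e\<in>KS. w (inv p ` e)) = (\<Sum>e\<in>KS. w e)"
        by (rule sum.reindex_bij_betw)
    qed
    also have "\<dots> = N * (\<Sum>e\<in>KS. w e)" unfolding N_def by simp
    finally show ?thesis .
  qed
  have "KS \<noteq> {}" using cardKS C0 C_def by auto
  then obtain e0 where e0: "e0 \<in> KS" by blast
  have cc: "c e = c e0" if "e \<in> KS" for e using const[OF that e0] .
  have "(\<Sum>e\<in>KS. c e) = (\<Sum>e\<in>KS. c e0)" using cc by (rule sum.cong[OF refl])
  then have ce0: "C * c e0 = N * (\<Sum>e\<in>KS. w e)" using tot cardKS C_def by simp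
  have "(\<Sum>p\<in>perms V. ip V k (permw p w) u) = (\<Sum>p\<in>perms V. \<Sum>e\<in>KS. w (inv p ` e) * u e)"
    unfolding ip_def permw_def KS_def ..
  also have "\<dots> = (\<Sum>e\<in>KS. \<Sum>p\<in>perms V. w (inv p ` e) * u e)" by (rule sum.swap)
  also have "\<dots> = (\<Sum>e\<in>KS. c e * u e)" unfolding c_def by (simp add: sum_distrib_right)
  also have "\<dots> = (\<Sum>e\<in>KS. c e0 * u e)" using cc by (simp cong: sum.cong)
  also have "\<dots> = c e0 * (\<Sum>e\<in>KS. u e)" by (simp add: sum_distrib_left)
  also have "\<dots> = N * ((\<Sum>e\<in>KS. w e) / C * ((\<Sum>e\<in>KS. u e) / C) * C)"
    using ce0 C0 by (simp add: field_simps)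
  finally show ?thesis unfolding N_def dens_def KS_def C_def .
qed


definition bpoly :: "nat \<Rightarrow> nat \<Rightarrow> real poly" where
  "bpoly a b = monom 1 a * [:1, -1:] ^ b"

lemma poly_bpoly: "poly (bpoly a b) p = p ^ a * (1 - p) ^ b"
  unfolding bpoly_def by (simp add: poly_monom)

lemma degree_bpoly: "degree (bpoly a b) \<le> a + b"
proof -
  have "degree (bpoly a b) \<le> degree (monom (1::real) a) + degree ([:1, -1:] ^ b :: real poly)"
    unfolding bpoly_def by (rule degree_mult_le)
  also have "\<dots> \<le> a + b"
    using degree_monom_le[of "1::real" a] degree_power_le[of "[:1, -1:] :: real poly" b]
    by simp
  finally show ?thesis .
qed

lemma coeff_Y_pow1: "coeff ([:1, -1:] ^ b :: real poly) 1 = - real b"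
proof (induction b)
  case 0 then show ?case by simp
next
  case (Suc b)
  have c0: "coeff ([:1, -1:] ^ b :: real poly) 0 = 1" by (simp add: coeff_0_power)
  have "[:1, -1:] ^ Suc b = [:1, -1:] * ([:1, -1:] ^ b :: real poly)" by simp
  also have "coeff \<dots> 1 = coeff ([:1, -1:] ^ b :: real poly) 1 - coeff ([:1, -1:] ^ b :: real poly) 0"
    by (simp add: coeff_mult)
  finally show ?case using Suc c0 by simp
qed

lemma coeff_bpoly1: "coeff (bpoly a b) 1 = (if a = 0 then - real b else if a = 1 then 1 else 0)"
proof -
  have c0: "coeff ([:1, -1:] ^ b :: real poly) 0 = 1" by (simp add: coeff_0_power)
  show ?thesis unfolding bpoly_def coeff_monom_mult using c0 coeff_Y_pow1[of b]
    by (cases a) (auto)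
qed

lemma marg_aux:
  fixes \<phi> :: "nat set \<Rightarrow> real"
  assumes "finite R" "finite Q" "R \<inter> Q = {}"
  shows "(\<Sum>T\<in>Pow (Q \<union> R). p ^ card T * (1 - p) ^ (card (Q \<union> R) - card T) * \<phi> (T \<inter> Q))
       = (\<Sum>V\<in>Pow Q. p ^ card V * (1 - p) ^ (card Q - card V) * \<phi> V)"
  using assms
proof (induction R rule: finite_induct)
  case empty
  show ?case by (intro sum.cong refl) (auto simp: Int_absorb2)
next
  case (insert a R)
  define X where "X = Q \<union> R"
  have finX: "finite X" using insert X_def by simp
  have aX: "a \<notin> X" using insert X_def by auto
  have QX: "Q \<union> insert a R = insert a X" unfolding X_def by auto
  define g where "g T = p ^ card T * (1 - p) ^ (card (insert a X) - card T) * \<phi> (T \<inter> Q)" for T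
  have disj: "Pow X \<inter> insert a ` Pow X = {}" using aX by auto
  have inj: "inj_on (insert a) (Pow X)"
    using aX by (auto simp: inj_on_def)
  have "(\<Sum>T\<in>Pow (insert a X). g T) = (\<Sum>T\<in>Pow X. g T) + (\<Sum>T\<in>insert a ` Pow X. g T)"
    unfolding Pow_insert using finX disj by (intro sum.union_disjoint) auto
  also have "(\<Sum>T\<in>insert a ` Pow X. g T) = (\<Sum>T\<in>Pow X. g (insert a T))"
    by (rule sum.reindex[OF inj, unfolded o_def])
  also have "(\<Sum>T\<in>Pow X. g T) + (\<Sum>T\<in>Pow X. g (insert a T))
      = (\<Sum>T\<in>Pow X. p ^ card T * (1 - p) ^ (card X - card T) * \<phi> (T \<inter> Q))"
    unfolding sum.distrib[symmetric]
  proof (rule sum.cong[OF refl])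
    fix T assume T: "T \<in> Pow X"
    then have TX: "T \<subseteq> X" by simp
    have finT: "finite T" using TX finX finite_subset by auto
    have aT: "a \<notin> T" using TX aX by auto
    have cT: "card T \<le> card X" using TX finX by (rule card_mono[rotated])
    have cX: "card (insert a X) = Suc (card X)" using aX finX by simp
    have cIT: "card (insert a T) = Suc (card T)" using aT finT by simp
    have iQ: "insert a T \<inter> Q = T \<inter> Q" using insert.prems insert.hyps aT by auto
    have e1: "card (insert a X) - card T = Suc (card X - card T)" using cX cT by simp
    have e2: "card (insert a X) - card (insert a T) = card X - card T" using cX cIT by simp
    show "g T + g (insert a T) = p ^ card T * (1 - p) ^ (card X - card T) * \<phi> (T \<inter> Q)"
      using e1 e2 iQ cIT unfolding g_def by (simp add: algebra_simps)
  qed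
  also have "\<dots> = (\<Sum>V\<in>Pow Q. p ^ card V * (1 - p) ^ (card Q - card V) * \<phi> V)"
    unfolding X_def using insert by (intro insert.IH) auto
  finally show ?case unfolding QX g_def .
qed

lemma marg:
  fixes \<phi> :: "nat set \<Rightarrow> real"
  assumes "finite S" "Q \<subseteq> S"
  shows "(\<Sum>T\<in>Pow S. p ^ card T * (1 - p) ^ (card S - card T) * \<phi> (T \<inter> Q))
       = (\<Sum>V\<in>Pow Q. p ^ card V * (1 - p) ^ (card Q - card V) * \<phi> V)"
proof -
  have "S = Q \<union> (S - Q)" using assms by auto
  then show ?thesis using marg_aux[where R="S - Q" and Q=Q and \<phi>=\<phi> and p=p] assms finite_subset by (metis Diff_disjoint Int_commute finite_Diff)
qed

lemma wsum: "finite (S::nat set) \<Longrightarrow> (\<Sum>T\<in>Pow S. p ^ card T * (1 - p) ^ (card S - card T)) = (1::real)"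
  using marg[where S=S and Q="{}" and \<phi>="\<lambda>_. 1" and p=p] by simp

lemma swap_poly:
  fixes F :: "nat set \<Rightarrow> real" and S :: "nat set" and KS :: "'e set"
    and trm :: "'e \<Rightarrow> nat set \<Rightarrow> real" and Q :: "'e \<Rightarrow> nat set"
  assumes finS: "finite S" and finKS: "finite KS"
    and Q: "\<And>e. e \<in> KS \<Longrightarrow> Q e \<subseteq> S \<and> card (Q e) \<le> k"
    and F: "\<And>T. T \<subseteq> S \<Longrightarrow> F T = (\<Sum>e\<in>KS. trm e (T \<inter> Q e))"
  shows "\<exists>R. degree R \<le> k \<and>
    (\<forall>p. poly R p = (\<Sum>T\<in>Pow S. p ^ card T * (1 - p) ^ (card S - card T) * (F T - F {}))) \<and>
    coeff R 1 = (\<Sum>i\<in>S. F {i} - F {})"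
proof -
  define R where "R = (\<Sum>T\<in>Pow S. smult (F T - F {}) (bpoly (card T) (card S - card T)))"
  define PQ where "PQ = (\<Sum>e\<in>KS. \<Sum>V\<in>Pow (Q e). smult (trm e V - trm e {}) (bpoly (card V) (card (Q e) - card V)))"
  have polyR: "poly R p = (\<Sum>T\<in>Pow S. p ^ card T * (1 - p) ^ (card S - card T) * (F T - F {}))" for p
    unfolding R_def poly_sum poly_smult poly_bpoly by (simp add: mult_ac)
  have F0: "F {} = (\<Sum>e\<in>KS. trm e {})" using F[of "{}"] by simp
  have "poly R p = poly PQ p" for p
  proof -
    have "poly R p = (\<Sum>T\<in>Pow S. p ^ card T * (1 - p) ^ (card S - card T) *
                         (\<Sum>e\<in>KS. trm e (T \<inter> Q e) - trm e {}))"
      unfolding polyR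
    proof (rule sum.cong[OF refl])
      fix T assume "T \<in> Pow S"
      then have "F T - F {} = (\<Sum>e\<in>KS. trm e (T \<inter> Q e) - trm e {})"
        using F[of T] F0 by (simp add: sum_subtractf)
      then show "p ^ card T * (1 - p) ^ (card S - card T) * (F T - F {}) =
          p ^ card T * (1 - p) ^ (card S - card T) * (\<Sum>e\<in>KS. trm e (T \<inter> Q e) - trm e {})" by simp
    qed
    also have "\<dots> = (\<Sum>e\<in>KS. \<Sum>T\<in>Pow S. p ^ card T * (1 - p) ^ (card S - card T) *
                         (trm e (T \<inter> Q e) - trm e {}))"
      by (simp add: sum_distrib_left sum.swap[of _ "Pow S"])
    also have "\<dots> = (\<Sum>e\<in>KS. \<Sum>V\<in>Pow (Q e). p ^ card V * (1 - p) ^ (card (Q e) - card V) *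
                         (trm e V - trm e {}))"
    proof (rule sum.cong[OF refl])
      fix e assume "e \<in> KS"
      then have "Q e \<subseteq> S" using Q by blast
      then show "(\<Sum>T\<in>Pow S. p ^ card T * (1 - p) ^ (card S - card T) * (trm e (T \<inter> Q e) - trm e {})) =
          (\<Sum>V\<in>Pow (Q e). p ^ card V * (1 - p) ^ (card (Q e) - card V) * (trm e V - trm e {}))"
        using marg[where S=S and Q="Q e" and \<phi>="\<lambda>V. trm e V - trm e {}" and p=p] finS by simp
    qed
    also have "\<dots> = poly PQ p"
      unfolding PQ_def poly_sum poly_smult poly_bpoly by (simp add: mult_ac)
    finally show ?thesis .
  qed
  then have RPQ: "R = PQ" using poly_eq_poly_eq_iff by blast
  have "degree PQ \<le> k"
    unfolding PQ_def
  proof (rule degree_sum_le[OF finKS])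
    fix e assume e: "e \<in> KS"
    have fQ: "finite (Q e)" using Q[OF e] finS finite_subset by blast
    show "degree (\<Sum>V\<in>Pow (Q e). smult (trm e V - trm e {}) (bpoly (card V) (card (Q e) - card V))) \<le> k"
    proof (rule degree_sum_le)
      show "finite (Pow (Q e))" using fQ by simp
    next
      fix V assume "V \<in> Pow (Q e)"
      then have "card V \<le> card (Q e)" using fQ by (simp add: card_mono)
      then have "card V + (card (Q e) - card V) \<le> k" using Q[OF e] by simp
      then show "degree (smult (trm e V - trm e {}) (bpoly (card V) (card (Q e) - card V))) \<le> k"
        by (meson degree_bpoly degree_smult_le order_trans)
    qed
  qed
  then have degR: "degree R \<le> k" using RPQ by simp
  have "coeff R 1 = (\<Sum>T\<in>Pow S. (F T - F {}) * coeff (bpoly (card T) (card S - card T)) 1)"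
    unfolding R_def coeff_sum by simp
  also have "\<dots> = (\<Sum>T\<in>Pow S. if card T = 1 then F T - F {} else 0)"
  proof (rule sum.cong[OF refl])
    fix T assume T: "T \<in> Pow S"
    then have fT: "finite T" using finS finite_subset by auto
    show "(F T - F {}) * coeff (bpoly (card T) (card S - card T)) 1 = (if card T = 1 then F T - F {} else 0)"
      using fT coeff_bpoly1[of "card T" "card S - card T"] by (cases "card T = 0") auto
  qed
  also have "\<dots> = (\<Sum>T\<in>{T\<in>Pow S. card T = 1}. F T - F {})"
    using finS by (rule sum.inter_filter[symmetric, OF finite_Pow_iff[THEN iffD2]])
  also have "{T\<in>Pow S. card T = 1} = (\<lambda>i. {i}) ` S"
    by (auto simp: card_1_singleton_iff)
  also have "(\<Sum>T\<in>(\<lambda>i. {i}) ` S. F T - F {}) = (\<Sum>i\<in>S. F {i} - F {})"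
    by (subst sum.reindex) (auto simp: inj_on_def)
  finally show ?thesis using degR polyR by blast
qed

lemma swap_bound:
  fixes F :: "nat set \<Rightarrow> real" and S :: "nat set" and KS :: "'e set"
    and trm :: "'e \<Rightarrow> nat set \<Rightarrow> real" and Q :: "'e \<Rightarrow> nat set"
  assumes k: "k \<ge> 1" and finS: "finite S" and finKS: "finite KS"
    and Q: "\<And>e. e \<in> KS \<Longrightarrow> Q e \<subseteq> S \<and> card (Q e) \<le> k"
    and F: "\<And>T. T \<subseteq> S \<Longrightarrow> F T = (\<Sum>e\<in>KS. trm e (T \<inter> Q e))"
    and bnds: "\<And>T. T \<subseteq> S \<Longrightarrow> lo \<le> F T \<and> F T \<le> hi"
  shows "(\<Sum>i\<in>S. F {i} - F {}) \<ge> 0 \<Longrightarrow>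
           (\<Sum>i\<in>S. F {i} - F {})^2 \<le> 4 * real k * KL k * (hi - F {}) * ((hi - F {}) + (F {} - lo))"
    and "(\<Sum>i\<in>S. F {i} - F {}) \<le> 0 \<Longrightarrow>
           (\<Sum>i\<in>S. F {i} - F {})^2 \<le> 4 * real k * KL k * (F {} - lo) * ((F {} - lo) + (hi - F {}))"
proof -
  obtain R where deg: "degree R \<le> k"
    and pR: "\<And>p. poly R p = (\<Sum>T\<in>Pow S. p ^ card T * (1 - p) ^ (card S - card T) * (F T - F {}))"
    and cR: "coeff R 1 = (\<Sum>i\<in>S. F {i} - F {})"
    using swap_poly[where F=F and S=S and KS=KS and trm=trm and Q=Q and k=k, OF finS finKS Q F] by blast
  have R0: "poly R 0 = 0" unfolding pR
  proof (rule sum.neutral, rule ballI)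
    fix T assume T: "T \<in> Pow S"
    then have fT: "finite T" using finS finite_subset by auto
    show "0 ^ card T * (1 - 0) ^ (card S - card T) * (F T - F {}) = (0::real)"
      using fT by (cases "T = {}") auto
  qed
  have vals: "lo - F {} \<le> poly R p \<and> poly R p \<le> hi - F {}" if p: "p \<in> {0..1}" for p
  proof -
    define wt where "wt T = p ^ card T * (1 - p) ^ (card S - card T)" for T :: "nat set"
    have w0: "wt T \<ge> 0" for T using p unfolding wt_def by simp
    have ws: "(\<Sum>T\<in>Pow S. wt T) = 1" unfolding wt_def by (rule wsum[OF finS])
    have "poly R p \<le> (\<Sum>T\<in>Pow S. wt T * (hi - F {}))"
      unfolding pR wt_def[symmetric]
      by (rule sum_mono) (use bnds w0 in \<open>auto intro!: mult_left_mono\<close>)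
    also have "\<dots> = hi - F {}" using ws by (simp add: sum_distrib_right[symmetric])
    finally have up: "poly R p \<le> hi - F {}" .
    have "(\<Sum>T\<in>Pow S. wt T * (lo - F {})) \<le> poly R p"
      unfolding pR wt_def[symmetric]
      by (rule sum_mono) (use bnds w0 in \<open>auto intro!: mult_left_mono\<close>)
    moreover have "(\<Sum>T\<in>Pow S. wt T * (lo - F {})) = lo - F {}"
      using ws by (simp add: sum_distrib_right[symmetric])
    ultimately show ?thesis using up by simp
  qed
  show "(\<Sum>i\<in>S. F {i} - F {}) \<ge> 0 \<Longrightarrow>
           (\<Sum>i\<in>S. F {i} - F {})^2 \<le> 4 * real k * KL k * (hi - F {}) * ((hi - F {}) + (F {} - lo))"
  proof -
    assume pos: "(\<Sum>i\<in>S. F {i} - F {}) \<ge> 0"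
    have "(coeff R 1)^2 \<le> 4 * real k * KL k * (hi - F {}) * ((hi - F {}) + (F {} - lo))"
      by (rule poly_key[OF k deg R0]) (use vals pos cR in auto)
    then show ?thesis using cR by simp
  qed
  show "(\<Sum>i\<in>S. F {i} - F {}) \<le> 0 \<Longrightarrow>
           (\<Sum>i\<in>S. F {i} - F {})^2 \<le> 4 * real k * KL k * (F {} - lo) * ((F {} - lo) + (hi - F {}))"
  proof -
    assume neg: "(\<Sum>i\<in>S. F {i} - F {}) \<le> 0"
    have "(coeff (- R) 1)^2 \<le> 4 * real k * KL k * (F {} - lo) * ((F {} - lo) + (hi - F {}))"
    proof (rule poly_key)
      fix x :: real assume "x \<in> {0..1}"
      then have "lo - F {} \<le> poly R x \<and> poly R x \<le> hi - F {}" by (rule vals)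
      then show "- (hi - F {}) \<le> poly (- R) x \<and> poly (- R) x \<le> F {} - lo" by simp
    qed (use neg cR deg R0 k in auto)
    then show ?thesis using cR by simp
  qed
qed


definition pr :: "nat \<Rightarrow> nat" where "pr x = (x + 1) div 2"

definition swapT :: "nat set \<Rightarrow> nat \<Rightarrow> nat" where
  "swapT T x = (if pr x \<in> T then (if odd x then x + 1 else x - 1) else x)"

lemma pr_swapT: "pr (swapT T x) = pr x"
  unfolding swapT_def pr_def by (cases "x = 0") (auto elim!: oddE evenE)

lemma swapT_invol: "swapT T (swapT T x) = x"
proof (cases "pr x \<in> T")
  case True
  then have "pr (swapT T x) \<in> T" by (simp add: pr_swapT)
  then show ?thesis using True unfolding swapT_def by (cases "x = 0") (auto elim!: oddE evenE)
next
  case False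
  then show ?thesis unfolding swapT_def by simp
qed

lemma swapT_comp_invol: "swapT T \<circ> swapT T = id"
  by (simp add: fun_eq_iff swapT_invol)

lemma bij_swapT: "bij (swapT T)"
  by (rule o_bij[OF swapT_comp_invol swapT_comp_invol])

lemma inv_swapT: "inv (swapT T) = swapT T"
  by (rule inv_unique_comp) (simp_all add: swapT_comp_invol)

lemma swapT_permutes:
  assumes "T \<subseteq> {1..n div 2}"
  shows "swapT T permutes {1..n}"
  unfolding permutes_def
proof (intro conjI allI impI)
  fix x :: nat assume x: "x \<notin> {1..n}"
  have "pr x \<notin> T"
  proof
    assume "pr x \<in> T"
    then have "1 \<le> pr x" "pr x \<le> n div 2" using assms by auto
    then show False using x unfolding pr_def by auto
  qed
  then show "swapT T x = x" unfolding swapT_def by simp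
next
  fix y
  show "\<exists>!x. swapT T x = y"
    by (rule ex1I[of _ "swapT T y"]) (auto simp: swapT_invol dest: arg_cong[of _ _ "swapT T"])
qed

lemma swapT_empty: "swapT {} = id"
  by (simp add: fun_eq_iff swapT_def)

lemma swapT_single:
  assumes "i \<ge> 1" shows "swapT {i} = Transposition.transpose (2 * i - 1) (2 * i)"
proof
  fix x
  show "swapT {i} x = Transposition.transpose (2 * i - 1) (2 * i) x"
    unfolding swapT_def pr_def Transposition.transpose_def using assms
    by (auto elim!: oddE evenE)
qed

lemma swapT_local:
  assumes "A \<inter> pr ` e = B \<inter> pr ` e"
  shows "swapT A ` e = swapT B ` e"
proof (rule image_cong[OF refl])
  fix x assume "x \<in> e"
  then have "pr x \<in> A \<longleftrightarrow> pr x \<in> B" using assms by blast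
  then show "swapT A x = swapT B x" unfolding swapT_def by simp
qed


definition Phi where "Phi V k w u p s = ip V k (permw p w) (permw s u)"

definition Dl where
  "Dl V k w u i p s = Phi V k w u (Transposition.transpose (2*i-1) (2*i) \<circ> p) s - Phi V k w u p s"

lemma sum_pos_part:
  fixes f :: "nat \<Rightarrow> real"
  assumes "finite A"
  shows "(\<Sum>i\<in>{i\<in>A. f i > 0}. f i) = (\<Sum>i\<in>A. max (f i) 0)"
    and "(\<Sum>i\<in>{i\<in>A. f i < 0}. f i) = - (\<Sum>i\<in>A. max (- f i) 0)"
proof -
  have "(\<Sum>i\<in>A. max (f i) 0) = (\<Sum>i\<in>A. if f i > 0 then f i else 0)"
    by (intro sum.cong) auto
  also have "\<dots> = (\<Sum>i\<in>{i\<in>A. f i > 0}. f i)" using assms by (simp add: sum.inter_filter)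
  finally show "(\<Sum>i\<in>{i\<in>A. f i > 0}. f i) = (\<Sum>i\<in>A. max (f i) 0)" by simp
  have "(\<Sum>i\<in>A. max (- f i) 0) = (\<Sum>i\<in>A. if f i < 0 then - f i else 0)"
    by (intro sum.cong) auto
  also have "\<dots> = (\<Sum>i\<in>{i\<in>A. f i < 0}. - f i)" using assms by (simp add: sum.inter_filter)
  finally show "(\<Sum>i\<in>{i\<in>A. f i < 0}. f i) = - (\<Sum>i\<in>A. max (- f i) 0)"
    by (simp add: sum_negf)
qed

lemma F_decomp:
  fixes n :: nat and w u :: "nat set \<Rightarrow> real"
  assumes p: "p permutes {1..n}" and TS: "T \<subseteq> S"
  shows "Phi {1..n} k w u (swapT T \<circ> p) s =
     (\<Sum>e\<in>ksubsets {1..n} k. (\<lambda>e T. w (inv p ` swapT T ` e) * permw s u e) e (T \<inter> (pr ` e \<inter> S)))"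
  unfolding Phi_def ip_def
proof (rule sum.cong[OF refl])
  fix e
  have "inv (swapT T \<circ> p) = inv p \<circ> swapT T"
    using permutes_bij[OF p] bij_swapT by (simp add: o_inv_distrib inv_swapT)
  then have "permw (swapT T \<circ> p) w e = w (inv p ` swapT T ` e)"
    unfolding permw_def by (simp add: image_comp)
  moreover have "swapT T ` e = swapT (T \<inter> (pr ` e \<inter> S)) ` e"
    by (rule swapT_local) (use TS in auto)
  ultimately show "permw (swapT T \<circ> p) w e * permw s u e =
         (\<lambda>e T. w (inv p ` swapT T ` e) * permw s u e) e (T \<inter> (pr ` e \<inter> S))" by simp
qed

lemma per_pair:
  fixes n :: nat and w u :: "nat set \<Rightarrow> real"
  assumes k: "k \<ge> 1" and p: "p permutes {1..n}" and s: "s permutes {1..n}"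
    and bnd: "\<And>q. q permutes {1..n} \<Longrightarrow> lo \<le> Phi {1..n} k w u q s \<and> Phi {1..n} k w u q s \<le> hi"
  shows "(\<Sum>i\<in>{1..n div 2}. max (Dl {1..n} k w u i p s) 0)^2
          \<le> 4 * real k * KL k * (hi - Phi {1..n} k w u p s) * ((hi - Phi {1..n} k w u p s) + (Phi {1..n} k w u p s - lo))"
    and "(\<Sum>i\<in>{1..n div 2}. max (- Dl {1..n} k w u i p s) 0)^2
          \<le> 4 * real k * KL k * (Phi {1..n} k w u p s - lo) * ((Phi {1..n} k w u p s - lo) + (hi - Phi {1..n} k w u p s))"
proof -
  define F where "F T = Phi {1..n} k w u (swapT T \<circ> p) s" for T
  define trm where "trm e T = w (inv p ` swapT T ` e) * permw s u e" for e T
  have F0: "F {} = Phi {1..n} k w u p s" unfolding F_def by (simp add: swapT_empty)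
  have F1: "F {i} - F {} = Dl {1..n} k w u i p s" if "i \<in> {1..n div 2}" for i
    using that unfolding F_def Dl_def by (simp add: swapT_single swapT_empty)
  have finKS: "finite (ksubsets {1..n} k)"
    by (rule finite_subset[of _ "Pow {1..n}"]) (auto simp: ksubsets_def)
  have gen: "(\<Sum>i\<in>S. F {i} - F {}) \<ge> 0 \<Longrightarrow>
           (\<Sum>i\<in>S. F {i} - F {})^2 \<le> 4 * real k * KL k * (hi - F {}) * ((hi - F {}) + (F {} - lo))"
        "(\<Sum>i\<in>S. F {i} - F {}) \<le> 0 \<Longrightarrow>
           (\<Sum>i\<in>S. F {i} - F {})^2 \<le> 4 * real k * KL k * (F {} - lo) * ((F {} - lo) + (hi - F {}))"
    if S: "S \<subseteq> {1..n div 2}" for S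
  proof -
    have finS: "finite S" using S finite_subset by blast
    have Q: "pr ` e \<inter> S \<subseteq> S \<and> card (pr ` e \<inter> S) \<le> k" if e: "e \<in> ksubsets {1..n} k" for e
    proof -
      have fe: "finite e" "card e = k" using e unfolding ksubsets_def by (auto intro: finite_subset)
      have "card (pr ` e \<inter> S) \<le> card (pr ` e)" using fe by (intro card_mono) auto
      also have "\<dots> \<le> card e" using fe(1) by (rule card_image_le)
      finally show ?thesis using fe by simp
    qed
    have Fd: "F T = (\<Sum>e\<in>ksubsets {1..n} k. trm e (T \<inter> (pr ` e \<inter> S)))" if "T \<subseteq> S" for T
      unfolding F_def trm_def using F_decomp[OF p that] .
    have bnds: "lo \<le> F T \<and> F T \<le> hi" if "T \<subseteq> S" for T
    proof -
      have "swapT T permutes {1..n}" using that S by (intro swapT_permutes) auto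
      then have "swapT T \<circ> p permutes {1..n}" using p by (rule permutes_compose[rotated])
      then show ?thesis unfolding F_def by (rule bnd)
    qed
    show "(\<Sum>i\<in>S. F {i} - F {}) \<ge> 0 \<Longrightarrow>
           (\<Sum>i\<in>S. F {i} - F {})^2 \<le> 4 * real k * KL k * (hi - F {}) * ((hi - F {}) + (F {} - lo))"
      by (rule swap_bound(1)[where F=F and S=S and KS="ksubsets {1..n} k" and trm=trm and Q="\<lambda>e. pr ` e \<inter> S",
            OF k finS finKS Q Fd bnds])
    show "(\<Sum>i\<in>S. F {i} - F {}) \<le> 0 \<Longrightarrow>
           (\<Sum>i\<in>S. F {i} - F {})^2 \<le> 4 * real k * KL k * (F {} - lo) * ((F {} - lo) + (hi - F {}))"
      by (rule swap_bound(2)[where F=F and S=S and KS="ksubsets {1..n} k" and trm=trm and Q="\<lambda>e. pr ` e \<inter> S",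
            OF k finS finKS Q Fd bnds])
  qed
  define Sp where "Sp = {i\<in>{1..n div 2}. Dl {1..n} k w u i p s > 0}"
  define Sn where "Sn = {i\<in>{1..n div 2}. Dl {1..n} k w u i p s < 0}"
  have "(\<Sum>i\<in>Sp. F {i} - F {}) = (\<Sum>i\<in>Sp. Dl {1..n} k w u i p s)"
    by (rule sum.cong) (auto simp: Sp_def F1)
  also have "\<dots> = (\<Sum>i\<in>{1..n div 2}. max (Dl {1..n} k w u i p s) 0)"
    unfolding Sp_def by (rule sum_pos_part(1)) simp
  finally have ep: "(\<Sum>i\<in>Sp. F {i} - F {}) = (\<Sum>i\<in>{1..n div 2}. max (Dl {1..n} k w u i p s) 0)" .
  have "(\<Sum>i\<in>Sn. F {i} - F {}) = (\<Sum>i\<in>Sn. Dl {1..n} k w u i p s)"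
    by (rule sum.cong) (auto simp: Sn_def F1)
  also have "\<dots> = - (\<Sum>i\<in>{1..n div 2}. max (- Dl {1..n} k w u i p s) 0)"
    unfolding Sn_def by (rule sum_pos_part(2)) simp
  finally have en: "(\<Sum>i\<in>Sn. F {i} - F {}) = - (\<Sum>i\<in>{1..n div 2}. max (- Dl {1..n} k w u i p s) 0)" .
  have SpS: "Sp \<subseteq> {1..n div 2}" and SnS: "Sn \<subseteq> {1..n div 2}" unfolding Sp_def Sn_def by auto
  have "(\<Sum>i\<in>Sp. F {i} - F {}) \<ge> 0" unfolding ep by (intro sum_nonneg) auto
  then have "(\<Sum>i\<in>Sp. F {i} - F {})^2 \<le> 4 * real k * KL k * (hi - F {}) * ((hi - F {}) + (F {} - lo))"
    by (rule gen(1)[OF SpS])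
  then show "(\<Sum>i\<in>{1..n div 2}. max (Dl {1..n} k w u i p s) 0)^2
          \<le> 4 * real k * KL k * (hi - Phi {1..n} k w u p s) * ((hi - Phi {1..n} k w u p s) + (Phi {1..n} k w u p s - lo))"
    unfolding ep unfolding F0 .
  have "(\<Sum>i\<in>Sn. F {i} - F {}) \<le> 0" unfolding en by (simp add: sum_nonneg)
  then have "(\<Sum>i\<in>Sn. F {i} - F {})^2 \<le> 4 * real k * KL k * (F {} - lo) * ((F {} - lo) + (hi - F {}))"
    by (rule gen(2)[OF SnS])
  then show "(\<Sum>i\<in>{1..n div 2}. max (- Dl {1..n} k w u i p s) 0)^2
          \<le> 4 * real k * KL k * (Phi {1..n} k w u p s - lo) * ((Phi {1..n} k w u p s - lo) + (hi - Phi {1..n} k w u p s))"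
    using en F0 by simp
qed


lemma exists_theta:
  fixes n i :: nat
  assumes i: "i \<in> {1..n div 2}"
  shows "\<exists>t. t permutes {1..n} \<and> t 1 = 2*i-1 \<and> t 2 = 2*i"
proof (cases "i = 1")
  case True then show ?thesis by (intro exI[of _ id]) auto
next
  case False
  then have i2: "i \<ge> 2" "2 * i \<le> n" using i by auto
  define t where "t = Transposition.transpose 1 (2*i-1) \<circ> Transposition.transpose 2 (2*i)"
  have "t permutes {1..n}" unfolding t_def using i2
    by (intro permutes_compose permutes_swap_id) auto
  moreover have "t 1 = 2*i-1" "t 2 = 2*i" unfolding t_def using i2
    by (auto simp: Transposition.transpose_def)
  ultimately show ?thesis by blast
qed

lemma Dl_sym:
  fixes n :: nat and w u :: "nat set \<Rightarrow> real"
  assumes i: "i \<in> {1..n div 2}" and t: "t permutes {1..n}" "t 1 = 2*i-1" "t 2 = 2*i"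
    and p: "p permutes {1..n}" and s: "s permutes {1..n}"
  shows "Dl {1..n} k w u i (t \<circ> p) (t \<circ> s) = Dl {1..n} k w u 1 p s"
proof -
  have bt: "bij t" using t by (simp add: permutes_bij)
  have it1: "inv t (2*i-1) = 1" using permutes_inverses(2)[OF t(1), of 1] t by simp
  have it2: "inv t (2*i) = 2" using permutes_inverses(2)[OF t(1), of 2] t by simp
  have "Transposition.transpose (2*i-1) (2*i) \<circ> t = t \<circ> Transposition.transpose 1 2"
    using transpose_comp_eq[OF bt, of "2*i-1" "2*i"] it1 it2 by simp
  then have c: "Transposition.transpose (2*i-1) (2*i) \<circ> (t \<circ> p) = t \<circ> (Transposition.transpose 1 2 \<circ> p)"
    by (simp add: o_assoc)
  have bp: "bij p" "bij s" using p s by (simp_all add: permutes_bij)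
  have b1: "bij (Transposition.transpose 1 2 \<circ> p)" using bp by (simp add: bij_comp)
  show ?thesis unfolding Dl_def Phi_def c
    using ip_inv[OF t(1) b1 bp(2)] ip_inv[OF t(1) bp(1) bp(2)] by simp
qed

lemma sum_sym:
  fixes n :: nat and w u :: "nat set \<Rightarrow> real" and g :: "real \<Rightarrow> real"
  assumes i: "i \<in> {1..n div 2}"
  shows "(\<Sum>p\<in>perms {1..n}. \<Sum>s\<in>perms {1..n}. g (Dl {1..n} k w u i p s))
       = (\<Sum>p\<in>perms {1..n}. \<Sum>s\<in>perms {1..n}. g (Dl {1..n} k w u 1 p s))"
proof -
  obtain t where t: "t permutes {1..n}" "t 1 = 2*i-1" "t 2 = 2*i" using exists_theta[OF i] by blast
  have "(\<Sum>p\<in>perms {1..n}. \<Sum>s\<in>perms {1..n}. g (Dl {1..n} k w u i p s))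
      = (\<Sum>p\<in>perms {1..n}. \<Sum>s\<in>perms {1..n}. g (Dl {1..n} k w u i (t \<circ> p) s))"
    unfolding perms_def by (rule setum_permutations_compose_left[OF t(1)])
  also have "\<dots> = (\<Sum>p\<in>perms {1..n}. \<Sum>s\<in>perms {1..n}. g (Dl {1..n} k w u i (t \<circ> p) (t \<circ> s)))"
    unfolding perms_def by (rule sum.cong[OF refl], rule setum_permutations_compose_left[OF t(1)])
  also have "\<dots> = (\<Sum>p\<in>perms {1..n}. \<Sum>s\<in>perms {1..n}. g (Dl {1..n} k w u 1 p s))"
    unfolding perms_def using Dl_sym[OF i t] by (intro sum.cong refl) auto
  finally show ?thesis .
qed

lemma sum_Dl1_zero:
  fixes n :: nat and w u :: "nat set \<Rightarrow> real"
  assumes n: "n \<ge> 2"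
  shows "(\<Sum>p\<in>perms {1..n}. Dl {1..n} k w u 1 p s) = 0"
proof -
  have t: "Transposition.transpose 1 2 permutes {1..n}" using n by (intro permutes_swap_id) auto
  have "(\<Sum>p\<in>perms {1..n}. Phi {1..n} k w u (Transposition.transpose 1 2 \<circ> p) s)
      = (\<Sum>p\<in>perms {1..n}. Phi {1..n} k w u p s)"
    unfolding perms_def by (rule setum_permutations_compose_left[OF t, symmetric])
  then show ?thesis unfolding Dl_def by (simp add: sum_subtractf)
qed

lemma sum_pos_abs:
  fixes n :: nat and w u :: "nat set \<Rightarrow> real"
  assumes n: "n \<ge> 2"
  shows "(\<Sum>p\<in>perms {1..n}. \<Sum>s\<in>perms {1..n}. max (Dl {1..n} k w u 1 p s) 0)
           = (\<Sum>p\<in>perms {1..n}. \<Sum>s\<in>perms {1..n}. \<bar>Dl {1..n} k w u 1 p s\<bar>) / 2"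
    and "(\<Sum>p\<in>perms {1..n}. \<Sum>s\<in>perms {1..n}. max (- Dl {1..n} k w u 1 p s) 0)
           = (\<Sum>p\<in>perms {1..n}. \<Sum>s\<in>perms {1..n}. \<bar>Dl {1..n} k w u 1 p s\<bar>) / 2"
proof -
  have z: "(\<Sum>p\<in>perms {1..n}. \<Sum>s\<in>perms {1..n}. Dl {1..n} k w u 1 p s) = 0"
    by (subst sum.swap, rule sum.neutral) (use sum_Dl1_zero[OF n] in blast)
  have m1: "max x 0 = (\<bar>x\<bar> + x) / 2" and m2: "max (- x) 0 = (\<bar>x\<bar> - x) / 2" for x :: real
    by auto
  show "(\<Sum>p\<in>perms {1..n}. \<Sum>s\<in>perms {1..n}. max (Dl {1..n} k w u 1 p s) 0)
           = (\<Sum>p\<in>perms {1..n}. \<Sum>s\<in>perms {1..n}. \<bar>Dl {1..n} k w u 1 p s\<bar>) / 2"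
    unfolding m1 using z by (simp add: sum.distrib sum_divide_distrib[symmetric])
  show "(\<Sum>p\<in>perms {1..n}. \<Sum>s\<in>perms {1..n}. max (- Dl {1..n} k w u 1 p s) 0)
           = (\<Sum>p\<in>perms {1..n}. \<Sum>s\<in>perms {1..n}. \<bar>Dl {1..n} k w u 1 p s\<bar>) / 2"
    unfolding m2 using z by (simp add: sum_subtractf sum_divide_distrib[symmetric])
qed

lemma amgm1:
  fixes X a b t :: real
  assumes "X^2 \<le> a * b" "a \<ge> 0" "b \<ge> 0" "t > 0"
  shows "X \<le> (t * a + b / t) / 2"
proof -
  have "(t * a - b / t)^2 \<ge> 0" by simp
  then have "4 * (a * b) \<le> (t * a + b / t)^2" using assms(4)
    by (simp add: power2_eq_square field_simps)
  then have "X^2 \<le> ((t * a + b / t) / 2)^2" using assms(1) by (simp add: power_divide)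
  moreover have "(t * a + b / t) / 2 \<ge> 0" using assms by simp
  ultimately show ?thesis by (rule power2_le_imp_le)
qed

lemma amgm2:
  fixes x a b :: real
  assumes x: "x \<ge> 0" and a: "a \<ge> 0" and b: "b \<ge> 0"
    and h: "\<And>t. t > 0 \<Longrightarrow> x \<le> (t * a + b / t) / 2"
  shows "x^2 \<le> a * b"
proof (cases "x = 0")
  case True then show ?thesis using a b by simp
next
  case False
  then have xp: "x > 0" using x by simp
  show ?thesis
  proof (cases "a = 0")
    case True
    show ?thesis
    proof (cases "b = 0")
      case True
      then have "x \<le> 0" using h[of 1] \<open>a = 0\<close> by simp
      then show ?thesis using xp by simp
    next
      case False
      then have "b > 0" using b by simp
      have "x \<le> (b / x * a + b / (b / x)) / 2" using h[of "b/x"] xp \<open>b > 0\<close> by simp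
      then have "x \<le> x / 2" using \<open>a = 0\<close> \<open>b > 0\<close> xp by simp
      then show ?thesis using xp by simp
    qed
  next
    case False
    then have ap: "a > 0" using a by simp
    have "x \<le> (x / a * a + b / (x / a)) / 2" using h[of "x/a"] xp ap by simp
    then have "x \<le> (x + a * b / x) / 2" using ap by (simp add: mult.commute)
    then have "x \<le> a * b / x" by simp
    then show ?thesis using xp by (simp add: power2_eq_square field_simps)
  qed
qed


lemma finite_perms: "finite V \<Longrightarrow> finite (perms V)"
  unfolding perms_def by (rule finite_permutations)

lemma card_perms_pos: "finite V \<Longrightarrow> card (perms V) > 0"
  unfolding perms_def by (subst card_permutations[OF refl]) auto

lemma disc_nonneg:
  assumes fin: "finite V" and kV: "k \<le> card V"
  shows "disc_plus V k w u \<ge> 0" "disc_minus V k w u \<ge> 0"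
proof -
  define f where "f q = ip V k (permw q w) u" for q
  have fP: "finite (perms V)" using fin by (rule finite_perms)
  have ne: "perms V \<noteq> {}" unfolding perms_def by (auto intro: exI[of _ id])
  have N0: "real (card (perms V)) > 0" using card_perms_pos[OF fin] by simp
  have mean: "(\<Sum>p\<in>perms V. f p) = real (card (perms V)) * (dens V k w * dens V k u * real (card V choose k))"
    unfolding f_def by (rule mean_ip[OF fin kV])
  have "(\<Sum>p\<in>perms V. f p) \<le> real (card (perms V)) * Max (f ` perms V)"
    by (rule sum_bounded_above) (use fP in auto)
  then show "disc_plus V k w u \<ge> 0" unfolding disc_plus_def f_def[symmetric] using mean N0 by simp
  have "real (card (perms V)) * Min (f ` perms V) \<le> (\<Sum>p\<in>perms V. f p)"
    by (rule sum_bounded_below) (use fP in auto)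
  then show "disc_minus V k w u \<ge> 0" unfolding disc_minus_def f_def[symmetric] using mean N0 by simp
qed

lemma main_bound:
  fixes n k :: nat and w u :: "nat set \<Rightarrow> real"
  assumes k: "k \<ge> 1" and nk: "n \<ge> k" and n2: "n \<ge> 2"
  shows "(gamma_xy {1..n} k 1 2 w u)^2 * (real n)^2
           \<le> 72 * (4 * real k * KL k) * (disc_plus {1..n} k w u * disc_minus {1..n} k w u)"
proof -
  define V where "V = {1..n}"
  define P where "P = perms V"
  define N where "N = real (card P)"
  define f where "f q = ip V k (permw q w) u" for q
  define Mx where "Mx = Max (f ` P)"
  define Mn where "Mn = Min (f ` P)"
  define mu where "mu = dens V k w * dens V k u * real (card V choose k)"
  define Dp where "Dp = Mx - mu"
  define Dm where "Dm = mu - Mn"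
  define C where "C = 4 * real k * KL k"
  define m where "m = n div 2"
  define G where "G = gamma_xy V k 1 2 w u"
  define Ph where "Ph p s = Phi V k w u p s" for p s
  have finV: "finite V" unfolding V_def by simp
  have cV: "card V = n" unfolding V_def by simp
  have kV: "k \<le> card V" using nk cV by simp
  have fP: "finite P" unfolding P_def using finV by (rule finite_perms)
  have N0: "N > 0" unfolding N_def P_def using card_perms_pos[OF finV] by simp
  have DpE: "disc_plus V k w u = Dp" unfolding disc_plus_def Dp_def Mx_def mu_def f_def P_def ..
  have DmE: "disc_minus V k w u = Dm" unfolding disc_minus_def Dm_def Mn_def mu_def f_def P_def ..
  have Dp0: "Dp \<ge> 0" and Dm0: "Dm \<ge> 0" using disc_nonneg[OF finV kV] DpE DmE by auto
  have C0: "C > 0" unfolding C_def using k KL_pos[of k] by simp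
  have Pp: "p \<in> P \<longleftrightarrow> p permutes V" for p unfolding P_def perms_def by simp
  have bnd: "Mn \<le> Ph q s \<and> Ph q s \<le> Mx" if q: "q permutes V" and s: "s permutes V" for q s
  proof -
    have "Ph q s = f (inv s \<circ> q)" unfolding Ph_def Phi_def f_def by (rule Phi_red[OF q s])
    moreover have "inv s \<circ> q \<in> P" unfolding Pp using q permutes_inv[OF s] by (rule permutes_compose)
    ultimately show ?thesis unfolding Mx_def Mn_def using fP by auto
  qed
  have sumPh: "(\<Sum>p\<in>P. Ph p s) = N * mu" if s: "s permutes V" for s
  proof -
    have "(\<Sum>p\<in>P. Ph p s) = (\<Sum>p\<in>P. f (inv s \<circ> p))"
      unfolding Ph_def Phi_def f_def using Phi_red[OF _ s] Pp by (intro sum.cong) auto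
    also have "\<dots> = (\<Sum>p\<in>P. f p)"
      unfolding P_def perms_def by (rule setum_permutations_compose_left[OF permutes_inv[OF s], symmetric])
    also have "\<dots> = N * mu" unfolding f_def N_def mu_def P_def by (rule mean_ip[OF finV kV])
    finally show ?thesis .
  qed
  have sumPh2: "(\<Sum>p\<in>P. \<Sum>s\<in>P. Ph p s) = N * N * mu"
  proof -
    have "(\<Sum>p\<in>P. \<Sum>s\<in>P. Ph p s) = (\<Sum>s\<in>P. \<Sum>p\<in>P. Ph p s)" by (rule sum.swap)
    also have "\<dots> = (\<Sum>s\<in>P. N * mu)" using sumPh Pp by (intro sum.cong) auto
    also have "\<dots> = N * N * mu" unfolding N_def by simp
    finally show ?thesis .
  qed
  have sumA: "(\<Sum>p\<in>P. \<Sum>s\<in>P. Mx - Ph p s) = N * N * Dp"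
    using sumPh2 unfolding Dp_def by (simp add: sum_subtractf N_def algebra_simps)
  have sumB: "(\<Sum>p\<in>P. \<Sum>s\<in>P. Ph p s - Mn) = N * N * Dm"
    using sumPh2 unfolding Dm_def by (simp add: sum_subtractf N_def algebra_simps)
  have sumAB: "(\<Sum>p\<in>P. \<Sum>s\<in>P. (Mx - Ph p s) + (Ph p s - Mn)) = N * N * (Dp + Dm)"
  proof -
    have "(\<Sum>p\<in>P. \<Sum>s\<in>P. (Mx - Ph p s) + (Ph p s - Mn)) = (\<Sum>p\<in>P. \<Sum>s\<in>P. Mx - Mn)" by simp
    also have "\<dots> = N * N * (Mx - Mn)" unfolding N_def by simp
    finally show ?thesis unfolding Dp_def Dm_def by simp
  qed
  define Xp where "Xp p s = (\<Sum>i\<in>{1..m}. max (Dl V k w u i p s) 0)" for p s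
  define Xn where "Xn p s = (\<Sum>i\<in>{1..m}. max (- Dl V k w u i p s) 0)" for p s
  have gam: "(\<Sum>p\<in>P. \<Sum>s\<in>P. \<bar>Dl V k w u 1 p s\<bar>) = N * N * G"
  proof -
    have "(\<Sum>p\<in>P. \<Sum>s\<in>P. \<bar>Dl V k w u 1 p s\<bar>)
        = (\<Sum>p\<in>P. \<Sum>s\<in>P. \<bar>ip V k (permw p w) (permw s u)
              - ip V k (permw (Transposition.transpose 1 2 \<circ> p) w) (permw s u)\<bar>)"
      unfolding Dl_def Phi_def by (intro sum.cong refl) (simp add: abs_minus_commute)
    then show ?thesis unfolding G_def gamma_xy_def N_def P_def using N0[unfolded N_def P_def]
      by (simp add: power2_eq_square)
  qed
  have sXp: "(\<Sum>p\<in>P. \<Sum>s\<in>P. Xp p s) = real m * (N * N * G / 2)"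
  proof -
    have "(\<Sum>p\<in>P. \<Sum>s\<in>P. Xp p s) = (\<Sum>i\<in>{1..m}. \<Sum>p\<in>P. \<Sum>s\<in>P. max (Dl V k w u i p s) 0)"
      unfolding Xp_def
    proof -
      have "(\<Sum>p\<in>P. \<Sum>s\<in>P. \<Sum>i\<in>{1..m}. max (Dl V k w u i p s) 0)
          = (\<Sum>p\<in>P. \<Sum>i\<in>{1..m}. \<Sum>s\<in>P. max (Dl V k w u i p s) 0)"
        by (rule sum.cong[OF refl], rule sum.swap)
      also have "\<dots> = (\<Sum>i\<in>{1..m}. \<Sum>p\<in>P. \<Sum>s\<in>P. max (Dl V k w u i p s) 0)"
        by (rule sum.swap)
      finally show "(\<Sum>p\<in>P. \<Sum>s\<in>P. \<Sum>i\<in>{1..m}. max (Dl V k w u i p s) 0)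
          = (\<Sum>i\<in>{1..m}. \<Sum>p\<in>P. \<Sum>s\<in>P. max (Dl V k w u i p s) 0)" .
    qed
    also have "\<dots> = (\<Sum>i\<in>{1..m}. N * N * G / 2)"
    proof (rule sum.cong[OF refl])
      fix i assume i: "i \<in> {1..m}"
      have "(\<Sum>p\<in>P. \<Sum>s\<in>P. max (Dl V k w u i p s) 0) = (\<Sum>p\<in>P. \<Sum>s\<in>P. max (Dl V k w u 1 p s) 0)"
        unfolding P_def V_def using sum_sym[where i=i and n=n and k=k and w=w and u=u and g="\<lambda>x. max x 0"] i m_def by simp
      also have "\<dots> = N * N * G / 2"
        using sum_pos_abs(1)[where k=k and w=w and u=u, OF n2] gam unfolding P_def V_def by simp
      finally show "(\<Sum>p\<in>P. \<Sum>s\<in>P. max (Dl V k w u i p s) 0) = N * N * G / 2" .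
    qed
    also have "\<dots> = real m * (N * N * G / 2)" by simp
    finally show ?thesis .
  qed
  have sXn: "(\<Sum>p\<in>P. \<Sum>s\<in>P. Xn p s) = real m * (N * N * G / 2)"
  proof -
    have "(\<Sum>p\<in>P. \<Sum>s\<in>P. Xn p s) = (\<Sum>i\<in>{1..m}. \<Sum>p\<in>P. \<Sum>s\<in>P. max (- Dl V k w u i p s) 0)"
      unfolding Xn_def
    proof -
      have "(\<Sum>p\<in>P. \<Sum>s\<in>P. \<Sum>i\<in>{1..m}. max (- Dl V k w u i p s) 0)
          = (\<Sum>p\<in>P. \<Sum>i\<in>{1..m}. \<Sum>s\<in>P. max (- Dl V k w u i p s) 0)"
        by (rule sum.cong[OF refl], rule sum.swap)
      also have "\<dots> = (\<Sum>i\<in>{1..m}. \<Sum>p\<in>P. \<Sum>s\<in>P. max (- Dl V k w u i p s) 0)"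
        by (rule sum.swap)
      finally show "(\<Sum>p\<in>P. \<Sum>s\<in>P. \<Sum>i\<in>{1..m}. max (- Dl V k w u i p s) 0)
          = (\<Sum>i\<in>{1..m}. \<Sum>p\<in>P. \<Sum>s\<in>P. max (- Dl V k w u i p s) 0)" .
    qed
    also have "\<dots> = (\<Sum>i\<in>{1..m}. N * N * G / 2)"
    proof (rule sum.cong[OF refl])
      fix i assume i: "i \<in> {1..m}"
      have "(\<Sum>p\<in>P. \<Sum>s\<in>P. max (- Dl V k w u i p s) 0) = (\<Sum>p\<in>P. \<Sum>s\<in>P. max (- Dl V k w u 1 p s) 0)"
        unfolding P_def V_def using sum_sym[where i=i and n=n and k=k and w=w and u=u and g="\<lambda>x. max (- x) 0"] i m_def by simp
      also have "\<dots> = N * N * G / 2"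
        using sum_pos_abs(2)[where k=k and w=w and u=u, OF n2] gam unfolding P_def V_def by simp
      finally show "(\<Sum>p\<in>P. \<Sum>s\<in>P. max (- Dl V k w u i p s) 0) = N * N * G / 2" .
    qed
    also have "\<dots> = real m * (N * N * G / 2)" by simp
    finally show ?thesis .
  qed
  have G0: "G \<ge> 0" unfolding G_def gamma_xy_def by (simp add: sum_nonneg)
  have pp: "Xp p s ^ 2 \<le> C * (Mx - Ph p s) * ((Mx - Ph p s) + (Ph p s - Mn))"
       "Xn p s ^ 2 \<le> C * (Ph p s - Mn) * ((Ph p s - Mn) + (Mx - Ph p s))"
    if p: "p \<in> P" and s: "s \<in> P" for p s
  proof -
    have p': "p permutes {1..n}" and s': "s permutes {1..n}" using p s Pp V_def by auto
    have b: "\<And>q. q permutes {1..n} \<Longrightarrow> Mn \<le> Phi {1..n} k w u q s \<and> Phi {1..n} k w u q s \<le> Mx"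
      using bnd s' unfolding Ph_def V_def by auto
    show "Xp p s ^ 2 \<le> C * (Mx - Ph p s) * ((Mx - Ph p s) + (Ph p s - Mn))"
      using per_pair(1)[OF k p' s' b] unfolding Xp_def Ph_def C_def V_def m_def by (simp add: mult.assoc)
    show "Xn p s ^ 2 \<le> C * (Ph p s - Mn) * ((Ph p s - Mn) + (Mx - Ph p s))"
      using per_pair(2)[OF k p' s' b] unfolding Xn_def Ph_def C_def V_def m_def by (simp add: mult.assoc)
  qed
  have AB0: "Mx - Ph p s \<ge> 0" "Ph p s - Mn \<ge> 0" if "p \<in> P" "s \<in> P" for p s
    using bnd[of p s] that Pp by auto
  have keyp: "(real m * (N * N * G / 2))^2 \<le> (N * N * Dp) * (C * (N * N * (Dp + Dm)))"
  proof (rule amgm2)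
    show "0 \<le> real m * (N * N * G / 2)" using G0 by simp
    show "0 \<le> N * N * Dp" using Dp0 by simp
    show "0 \<le> C * (N * N * (Dp + Dm))" using Dp0 Dm0 C0 by simp
    fix t :: real assume t: "t > 0"
    have "(\<Sum>p\<in>P. \<Sum>s\<in>P. Xp p s) \<le> (\<Sum>p\<in>P. \<Sum>s\<in>P. (t * (Mx - Ph p s) + C * ((Mx - Ph p s) + (Ph p s - Mn)) / t) / 2)"
    proof (intro sum_mono)
      fix p s assume ps: "p \<in> P" "s \<in> P"
      show "Xp p s \<le> (t * (Mx - Ph p s) + C * ((Mx - Ph p s) + (Ph p s - Mn)) / t) / 2"
        by (rule amgm1) (use pp(1)[OF ps] AB0[OF ps] C0 t in \<open>auto simp: mult_ac\<close>)
    qed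
    also have "\<dots> = (t * (N * N * Dp) + C * (N * N * (Dp + Dm)) / t) / 2"
      using sumA sumAB by (simp add: sum.distrib sum_divide_distrib[symmetric] sum_distrib_left[symmetric])
    finally show "real m * (N * N * G / 2) \<le> (t * (N * N * Dp) + C * (N * N * (Dp + Dm)) / t) / 2"
      using sXp by simp
  qed
  have keyn: "(real m * (N * N * G / 2))^2 \<le> (N * N * Dm) * (C * (N * N * (Dp + Dm)))"
  proof (rule amgm2)
    show "0 \<le> real m * (N * N * G / 2)" using G0 by simp
    show "0 \<le> N * N * Dm" using Dm0 by simp
    show "0 \<le> C * (N * N * (Dp + Dm))" using Dp0 Dm0 C0 by simp
    fix t :: real assume t: "t > 0"
    have "(\<Sum>p\<in>P. \<Sum>s\<in>P. Xn p s) \<le> (\<Sum>p\<in>P. \<Sum>s\<in>P. (t * (Ph p s - Mn) + C * ((Mx - Ph p s) + (Ph p s - Mn)) / t) / 2)"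
    proof (intro sum_mono)
      fix p s assume ps: "p \<in> P" "s \<in> P"
      show "Xn p s \<le> (t * (Ph p s - Mn) + C * ((Mx - Ph p s) + (Ph p s - Mn)) / t) / 2"
        by (rule amgm1) (use pp(2)[OF ps] AB0[OF ps] C0 t in \<open>auto simp: mult_ac add.commute\<close>)
    qed
    also have "\<dots> = (t * (N * N * Dm) + C * (N * N * (Dp + Dm)) / t) / 2"
      using sumB sumAB by (simp add: sum.distrib sum_divide_distrib[symmetric] sum_distrib_left[symmetric])
    finally show "real m * (N * N * G / 2) \<le> (t * (N * N * Dm) + C * (N * N * (Dp + Dm)) / t) / 2"
      using sXn by simp
  qed
  define y where "y = (real m * G / 2)^2"
  have N4: "N * N * (N * N) > 0" using N0 by simp
  have "y * (N * N * (N * N)) \<le> (C * Dp * (Dp + Dm)) * (N * N * (N * N))"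
    using keyp unfolding y_def by (simp add: power2_eq_square algebra_simps)
  then have yp: "y \<le> C * Dp * (Dp + Dm)" using N4 by (rule mult_right_le_imp_le)
  have "y * (N * N * (N * N)) \<le> (C * Dm * (Dp + Dm)) * (N * N * (N * N))"
    using keyn unfolding y_def by (simp add: power2_eq_square algebra_simps)
  then have yn: "y \<le> C * Dm * (Dp + Dm)" using N4 by (rule mult_right_le_imp_le)
  have y2: "y \<le> 2 * C * (Dp * Dm)"
  proof (cases "Dp \<le> Dm")
    case True
    then have "Dp * Dp \<le> Dp * Dm" using Dp0 by (rule mult_left_mono)
    then have "Dp * (Dp + Dm) \<le> 2 * (Dp * Dm)" by (simp add: algebra_simps)
    then have "C * (Dp * (Dp + Dm)) \<le> C * (2 * (Dp * Dm))" using C0 by simp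
    then show ?thesis using yp by (simp add: algebra_simps)
  next
    case False
    then have "Dm \<le> Dp" by simp
    then have "Dm * Dm \<le> Dm * Dp" using Dm0 by (rule mult_left_mono)
    then have "Dm * (Dp + Dm) \<le> 2 * (Dp * Dm)" by (simp add: algebra_simps)
    then have "C * (Dm * (Dp + Dm)) \<le> C * (2 * (Dp * Dm))" using C0 by simp
    then show ?thesis using yn by (simp add: algebra_simps)
  qed
  have "n \<le> 3 * m" unfolding m_def using n2 by linarith
  then have n3: "real n \<le> 3 * real m" by linarith
  have "(real n)^2 \<le> (3 * real m)^2" using n3 by (intro power_mono) auto
  then have "G^2 * (real n)^2 \<le> G^2 * (3 * real m)^2" by (intro mult_left_mono) auto
  also have "\<dots> = 36 * y" unfolding y_def by (simp add: power2_eq_square)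
  also have "\<dots> \<le> 72 * C * (Dp * Dm)" using y2 by (simp add: mult_ac)
  finally show ?thesis unfolding G_def V_def C_def DpE[unfolded V_def, symmetric] DmE[unfolded V_def, symmetric]
    by (simp add: mult.assoc)
qed

theorem lemma4p1:
  fixes k :: nat
  assumes "k \<ge> 1"
  shows "\<exists>c::real. c > 0 \<and>
    (\<forall>n::nat. \<forall>w u :: nat set \<Rightarrow> real. n \<ge> k \<longrightarrow>
       disc_plus {1..n} k w u * disc_minus {1..n} k w u
         \<ge> c^2 * (gamma_n n k w u)^2 * (real n)^2)"
proof -
  define C where "C = 72 * (4 * real k * KL k)"
  have C0: "C > 0" unfolding C_def using assms KL_pos[of k] by simp
  define c where "c = sqrt (1 / C)"
  have c0: "c > 0" unfolding c_def using C0 by simp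
  have c2: "c^2 = 1 / C" unfolding c_def using C0 by simp
  show ?thesis
  proof (intro exI[of _ c] conjI allI impI)
    show "c > 0" by (rule c0)
    fix n :: nat and w u :: "nat set \<Rightarrow> real"
    assume nk: "n \<ge> k"
    show "disc_plus {1..n} k w u * disc_minus {1..n} k w u \<ge> c^2 * (gamma_n n k w u)^2 * (real n)^2"
    proof (cases "n \<ge> 2")
      case True
      have g: "gamma_n n k w u = gamma_xy {1..n} k 1 2 w u" unfolding gamma_n_def using True by simp
      have "(gamma_xy {1..n} k 1 2 w u)^2 * (real n)^2 \<le> C * (disc_plus {1..n} k w u * disc_minus {1..n} k w u)"
        unfolding C_def by (rule main_bound[OF assms nk True])
      then have "(gamma_xy {1..n} k 1 2 w u)^2 * (real n)^2 / C \<le> disc_plus {1..n} k w u * disc_minus {1..n} k w u"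
        using C0 by (simp add: divide_simps mult.commute)
      then show ?thesis unfolding g c2 by (simp add: mult.commute)
    next
      case False
      have g: "gamma_n n k w u = 0" unfolding gamma_n_def using False by simp
      have "disc_plus {1..n} k w u \<ge> 0" "disc_minus {1..n} k w u \<ge> 0"
        using disc_nonneg[of "{1..n}" k w u] nk by auto
      then show ?thesis unfolding g by simp
    qed
  qed
qed


end
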